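(* Let $X$ be a Banach space. Then the following are equivalent: (i) $X$ has weak normal structure; (ii) every orbitally Kannan mapping which diminishes the radius of orbits, defined on a weakly compact convex subset of $X$ into itself, has a (unique) fixed point.
   Context: For $x\in X$ and $A\subseteq X$, $r_x(A)=\sup\{\|x-y\|:y\in A\}$ and $\delta(A)$ is the diameter; $O_T(x)=\{x,Tx,T^2x,\dots\}$. A map $T:C\to C$ is orbitally Kannan if $\|Tx-Ty\|\le\frac12\big(r_x(O_T(x))+r_y(O_T(y))\big)$ for all $x,y\in C$, and diminishes the radius of orbits if $r_{Tx}(O_T(Tx))\le r_x(O_T(x))$ for all $x\in C$. $X$ has weak normal structure if every weakly compact convex subset $K$ of $X$ with more than one point has normal structure: for every closed convex $K_0\subseteq K$ with $\delta(K_0)>0$ there is $x_0\in K_0$ with $r_{x_0}(K_0)<\delta(K_0)$. *)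

theory Defs
  imports "HOL-Analysis.Analysis"
begin

definition weak_topology :: "'a::real_normed_vector topology" where
  "weak_topology = topology_generated_by
     {f -` U | (f :: 'a \<Rightarrow> real) U. bounded_linear f \<and> open U}"

definition weakly_compact :: "'a::real_normed_vector set \<Rightarrow> bool" where
  "weakly_compact K \<longleftrightarrow> compactin weak_topology K"

definition rad :: "'a::real_normed_vector \<Rightarrow> 'a set \<Rightarrow> real" where
  "rad x A = (SUP y\<in>A. norm (x - y))"

definition orbit :: "('a \<Rightarrow> 'a) \<Rightarrow> 'a \<Rightarrow> 'a set" where
  "orbit T x = range (\<lambda>n. (T ^^ n) x)"

definition orbitally_kannan :: "'a::real_normed_vector set \<Rightarrow> ('a \<Rightarrow> 'a) \<Rightarrow> bool" where
  "orbitally_kannan C T \<longleftrightarrow>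
     (\<forall>x\<in>C. \<forall>y\<in>C. norm (T x - T y) \<le> (rad x (orbit T x) + rad y (orbit T y)) / 2)"

definition diminishes_radius_of_orbits :: "'a::real_normed_vector set \<Rightarrow> ('a \<Rightarrow> 'a) \<Rightarrow> bool" where
  "diminishes_radius_of_orbits C T \<longleftrightarrow>
     (\<forall>x\<in>C. rad (T x) (orbit T (T x)) \<le> rad x (orbit T x))"

definition normal_structure :: "'a::real_normed_vector set \<Rightarrow> bool" where
  "normal_structure K \<longleftrightarrow>
     (\<forall>K0. K0 \<subseteq> K \<and> closed K0 \<and> convex K0 \<and> diameter K0 > 0 \<longrightarrow>
        (\<exists>x0\<in>K0. rad x0 K0 < diameter K0))"

definition weak_normal_structure :: "'a::real_normed_vector itself \<Rightarrow> bool" where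
  "weak_normal_structure _ \<longleftrightarrow>
     (\<forall>K :: 'a set. weakly_compact K \<and> convex K \<and> (\<exists>x\<in>K. \<exists>y\<in>K. x \<noteq> y) \<longrightarrow>
        normal_structure K)"

end

theory Submission
  imports Defs
begin

definition graph_ok :: "('a::real_vector \<Rightarrow> real) \<Rightarrow> 'a \<Rightarrow> real \<Rightarrow> ('a \<times> real) set \<Rightarrow> bool" where
  "graph_ok p z a G \<longleftrightarrow> (0,0) \<in> G \<and> (\<forall>x s y t. (x,s) \<in> G \<longrightarrow> (y,t) \<in> G \<longrightarrow> (x+y, s+t) \<in> G)
     \<and> (\<forall>c x s. (x,s) \<in> G \<longrightarrow> (c *\<^sub>R x, c * s) \<in> G)
     \<and> (\<forall>x s t. (x,s) \<in> G \<longrightarrow> (x,t) \<in> G \<longrightarrow> s = t)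
     \<and> (\<forall>x s. (x,s) \<in> G \<longrightarrow> s \<le> p x) \<and> (z,a) \<in> G"

lemma graph_okD:
  assumes "graph_ok p z a G"
  shows "(0,0) \<in> G" "\<And>x s y t. (x,s) \<in> G \<Longrightarrow> (y,t) \<in> G \<Longrightarrow> (x+y, s+t) \<in> G"
    "\<And>c x s. (x,s) \<in> G \<Longrightarrow> (c *\<^sub>R x, c * s) \<in> G"
    "\<And>x s t. (x,s) \<in> G \<Longrightarrow> (x,t) \<in> G \<Longrightarrow> s = t"
    "\<And>x s. (x,s) \<in> G \<Longrightarrow> s \<le> p x" "(z,a) \<in> G"
  using assms unfolding graph_ok_def by blast+

lemma graph_okI:
  assumes "(0,0) \<in> G" "\<And>x s y t. (x,s) \<in> G \<Longrightarrow> (y,t) \<in> G \<Longrightarrow> (x+y, s+t) \<in> G"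
    "\<And>c x s. (x,s) \<in> G \<Longrightarrow> (c *\<^sub>R x, c * s) \<in> G"
    "\<And>x s t. (x,s) \<in> G \<Longrightarrow> (x,t) \<in> G \<Longrightarrow> s = t"
    "\<And>x s. (x,s) \<in> G \<Longrightarrow> s \<le> p x" "(z,a) \<in> G"
  shows "graph_ok p z a G"
  using assms unfolding graph_ok_def by blast

lemma hb_extend:
  fixes p :: "'a::real_vector \<Rightarrow> real"
  assumes sub: "\<And>x y. p (x + y) \<le> p x + p y"
    and hom: "\<And>c x. c > 0 \<Longrightarrow> p (c *\<^sub>R x) = c * p x"
    and M: "graph_ok p z a M" and w: "w \<notin> fst ` M"
  shows "\<exists>M'. graph_ok p z a M' \<and> M \<subseteq> M' \<and> M' \<noteq> M"
proof -
  have M0: "(0,0) \<in> M" and Madd: "\<And>x s y t. (x,s) \<in> M \<Longrightarrow> (y,t) \<in> M \<Longrightarrow> (x+y, s+t) \<in> M"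
    and Msc: "\<And>c x s. (x,s) \<in> M \<Longrightarrow> (c *\<^sub>R x, c * s) \<in> M"
    and Mfun: "\<And>x s t. (x,s) \<in> M \<Longrightarrow> (x,t) \<in> M \<Longrightarrow> s = t"
    and Mdom: "\<And>x s. (x,s) \<in> M \<Longrightarrow> s \<le> p x" and Mz: "(z,a) \<in> M"
    using graph_okD[OF M] by blast+
  define L where "L = {s - p (y - w) | y s. (y,s) \<in> M}"
  have Lne: "L \<noteq> {}" using M0 unfolding L_def by blast
  have Lub: "l \<le> p (x + w) - s'" if "l \<in> L" "(x,s') \<in> M" for l x s'
  proof -
    obtain y s where ys: "(y,s) \<in> M" "l = s - p (y - w)" using \<open>l \<in> L\<close> unfolding L_def by blast
    have "s + s' \<le> p (y + x)" using Mdom[OF Madd[OF ys(1) that(2)]] .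
    also have "\<dots> \<le> p (y - w) + p (x + w)" using sub[of "y - w" "x + w"] by (simp add: algebra_simps)
    finally show ?thesis using ys by simp
  qed
  have bdd: "bdd_above L" using Lub M0 unfolding bdd_above_def by blast
  define c where "c = Sup L"
  have c1: "s - p (y - w) \<le> c" if "(y,s) \<in> M" for y s
    unfolding c_def by (rule cSup_upper[OF _ bdd]) (use that L_def in blast)
  have c2: "c \<le> p (x + w) - s" if "(x,s) \<in> M" for x s
    unfolding c_def by (rule cSup_least[OF Lne]) (use Lub that in blast)
  define M' where "M' = {(x + t *\<^sub>R w, s + t * c) | x s t. (x,s) \<in> M}"
  have dom: "s + t * c \<le> p (x + t *\<^sub>R w)" if "(x,s) \<in> M" for x s t
  proof (cases "t > 0")
    case True
    have "(inverse t *\<^sub>R x, inverse t * s) \<in> M" using Msc[OF that] .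
    from c2[OF this] have "c \<le> p (inverse t *\<^sub>R x + w) - inverse t * s" .
    hence "t * c \<le> t * p (inverse t *\<^sub>R x + w) - s" using True
      by (simp add: field_simps)
    also have "t * p (inverse t *\<^sub>R x + w) = p (t *\<^sub>R (inverse t *\<^sub>R x + w))"
      using hom[OF True] by simp
    also have "t *\<^sub>R (inverse t *\<^sub>R x + w) = x + t *\<^sub>R w" using True
      by (simp add: scaleR_add_right)
    finally show ?thesis by simp
  next
    case False
    show ?thesis
    proof (cases "t = 0")
      case True then show ?thesis using Mdom[OF that] by simp
    next
      case False
      with \<open>\<not> t > 0\<close> have r: "-t > 0" by simp
      have "(inverse (-t) *\<^sub>R x, inverse (-t) * s) \<in> M" using Msc[OF that] .
      from c1[OF this] have "inverse (-t) * s - p (inverse (-t) *\<^sub>R x - w) \<le> c" .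
      hence "s - (-t) * p (inverse (-t) *\<^sub>R x - w) \<le> (-t) * c" using r
        by (simp add: field_simps)
      also have "(-t) * p (inverse (-t) *\<^sub>R x - w) = p ((-t) *\<^sub>R (inverse (-t) *\<^sub>R x - w))"
        using hom[OF r] by simp
      also have "(-t) *\<^sub>R (inverse (-t) *\<^sub>R x - w) = x + t *\<^sub>R w" using r
        by (simp add: scaleR_diff_right)
      finally show ?thesis by (simp add: algebra_simps)
    qed
  qed
  have ok: "graph_ok p z a M'"
  proof (rule graph_okI)
    show "(0,0) \<in> M'" unfolding M'_def using M0 by force
    show "(z,a) \<in> M'" unfolding M'_def using Mz by force
    fix x s y t
    assume "(x,s) \<in> M'" "(y,t) \<in> M'"
    then obtain x1 s1 t1 x2 s2 t2 where h: "(x1,s1) \<in> M" "(x2,s2) \<in> M"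
      "x = x1 + t1 *\<^sub>R w" "s = s1 + t1 * c" "y = x2 + t2 *\<^sub>R w" "t = s2 + t2 * c"
      unfolding M'_def by blast
    show "(x+y, s+t) \<in> M'" unfolding M'_def
      using Madd[OF h(1,2)] h(3-6)
      by (intro CollectI exI[of _ "x1+x2"] exI[of _ "s1+s2"] exI[of _ "t1+t2"])
         (simp add: algebra_simps scaleR_add_left)
  next
    fix cc x s
    assume "(x,s) \<in> M'"
    then obtain x1 s1 t1 where h: "(x1,s1) \<in> M" "x = x1 + t1 *\<^sub>R w" "s = s1 + t1 * c"
      unfolding M'_def by blast
    have "(cc *\<^sub>R x, cc * s) = (cc *\<^sub>R x1 + (cc * t1) *\<^sub>R w, cc * s1 + (cc * t1)*c)"
      using h(2,3) by (simp add: algebra_simps scaleR_add_right)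
    then show "(cc *\<^sub>R x, cc * s) \<in> M'" unfolding M'_def
      using Msc[OF h(1), of cc] by blast
  next
    fix x s t
    assume "(x,s) \<in> M'" "(x,t) \<in> M'"
    then obtain x1 s1 t1 x2 s2 t2 where h: "(x1,s1) \<in> M" "(x2,s2) \<in> M"
      "x = x1 + t1 *\<^sub>R w" "s = s1 + t1 * c" "x = x2 + t2 *\<^sub>R w" "t = s2 + t2 * c"
      unfolding M'_def by blast
    have "t1 = t2"
    proof (rule ccontr)
      assume ne: "t1 \<noteq> t2"
      have "(x2 + (-1) *\<^sub>R x1, s2 + (-1) * s1) \<in> M" using Madd[OF h(2) Msc[OF h(1)]] .
      from Msc[OF this, of "inverse (t1 - t2)"]
      have "(inverse (t1 - t2) *\<^sub>R (x2 + (-1) *\<^sub>R x1), inverse (t1 - t2) * (s2 + (-1) * s1)) \<in> M" .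
      moreover have "inverse (t1 - t2) *\<^sub>R (x2 + (-1) *\<^sub>R x1) = w"
      proof -
        have "x2 - x1 = (t1 - t2) *\<^sub>R w" using h(3,5) by (simp add: algebra_simps)
        thus ?thesis using ne by simp
      qed
      ultimately have "w \<in> fst ` M" by force
      thus False using w by simp
    qed
    with h have "x1 = x2" by simp
    with h \<open>t1 = t2\<close> Mfun show "s = t" by blast
  next
    fix x s
    assume "(x,s) \<in> M'"
    then obtain x1 s1 t1 where h: "(x1,s1) \<in> M" "x = x1 + t1 *\<^sub>R w" "s = s1 + t1 * c"
      unfolding M'_def by blast
    show "s \<le> p x" using dom[OF h(1)] h by simp
  qed
  have sub': "M \<subseteq> M'"
  proof
    fix u assume "u \<in> M"
    then obtain x s where "u = (x,s)" "(x,s) \<in> M" by (cases u) auto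
    thus "u \<in> M'" unfolding M'_def by (intro CollectI exI[of _ x] exI[of _ s] exI[of _ 0]) simp
  qed
  have "(0 + 1 *\<^sub>R w, 0 + 1 * c) \<in> M'" unfolding M'_def using M0 by blast
  hence "(w, c) \<in> M'" by simp
  moreover have "(w,c) \<notin> M" using w by force
  ultimately show ?thesis using ok sub' by blast
qed

lemma graph_ok_union:
  assumes "C \<in> chains {G. graph_ok p z a G}" "C \<noteq> {}"
  shows "graph_ok p z a (\<Union>C)"
proof -
  have CA: "\<And>G. G \<in> C \<Longrightarrow> graph_ok p z a G" using assms(1) unfolding chains_def by blast
  have ch: "\<And>G H. G \<in> C \<Longrightarrow> H \<in> C \<Longrightarrow> G \<subseteq> H \<or> H \<subseteq> G"
    using assms(1) unfolding chains_def chain_subset_def by blast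
  obtain G0 where G0: "G0 \<in> C" using assms(2) by blast
  have two: "\<exists>G\<in>C. u \<in> G \<and> v \<in> G" if uv: "u \<in> \<Union>C" "v \<in> \<Union>C" for u v
  proof -
    obtain G H where GH: "G \<in> C" "H \<in> C" "u \<in> G" "v \<in> H" using uv by blast
    show ?thesis
    proof (cases "G \<subseteq> H")
      case True thus ?thesis using GH by blast
    next
      case False hence "H \<subseteq> G" using ch[OF GH(1,2)] by blast
      thus ?thesis using GH by blast
    qed
  qed
  show ?thesis
  proof (rule graph_okI)
    show "(0,0) \<in> \<Union>C" using graph_okD(1)[OF CA[OF G0]] G0 by blast
    show "(z,a) \<in> \<Union>C" using graph_okD(6)[OF CA[OF G0]] G0 by blast
  next
    fix x s y t assume "(x,s) \<in> \<Union>C" "(y,t) \<in> \<Union>C"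
    then obtain G where G: "G \<in> C" "(x,s) \<in> G" "(y,t) \<in> G" using two by blast
    from graph_okD(2)[OF CA[OF G(1)] G(2,3)] G(1) show "(x+y, s+t) \<in> \<Union>C" by blast
  next
    fix c x s assume "(x,s) \<in> \<Union>C"
    then obtain G where G: "G \<in> C" "(x,s) \<in> G" by blast
    from graph_okD(3)[OF CA[OF G(1)] G(2)] G(1) show "(c *\<^sub>R x, c * s) \<in> \<Union>C" by blast
  next
    fix x s t assume "(x,s) \<in> \<Union>C" "(x,t) \<in> \<Union>C"
    then obtain G where G: "G \<in> C" "(x,s) \<in> G" "(x,t) \<in> G" using two by blast
    from graph_okD(4)[OF CA[OF G(1)] G(2,3)] show "s = t" .
  next
    fix x s assume "(x,s) \<in> \<Union>C"
    then obtain G where G: "G \<in> C" "(x,s) \<in> G" by blast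
    from graph_okD(5)[OF CA[OF G(1)] G(2)] show "s \<le> p x" .
  qed
qed

lemma hahn_banach:
  fixes p :: "'a::real_vector \<Rightarrow> real"
  assumes sub: "\<And>x y. p (x + y) \<le> p x + p y"
    and hom: "\<And>c x. c > 0 \<Longrightarrow> p (c *\<^sub>R x) = c * p x"
    and z: "z \<noteq> 0" and a1: "a \<le> p z" and a2: "- a \<le> p (- z)"
  shows "\<exists>f. linear f \<and> (\<forall>x. f x \<le> p x) \<and> f z = a"
proof -
  have p0: "p 0 = 0" using hom[of 2 0] by simp
  define G0 where "G0 = {(t *\<^sub>R z, t * a) | t. True}"
  have G0: "graph_ok p z a G0" unfolding G0_def
  proof (rule graph_okI)
    show "(0,0) \<in> {(t *\<^sub>R z, t * a) | t. True}" by (intro CollectI exI[of _ 0]) simp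
    show "(z,a) \<in> {(t *\<^sub>R z, t * a) | t. True}" by (intro CollectI exI[of _ 1]) simp
    fix x s y t assume "(x,s) \<in> {(t *\<^sub>R z, t * a) | t. True}" "(y,t) \<in> {(t *\<^sub>R z, t * a) | t. True}"
    then obtain t1 t2 where "x = t1 *\<^sub>R z" "s = t1 * a" "y = t2 *\<^sub>R z" "t = t2 * a" by blast
    thus "(x+y, s+t) \<in> {(t *\<^sub>R z, t * a) | t. True}"
      by (intro CollectI exI[of _ "t1 + t2"]) (simp add: algebra_simps scaleR_add_left)
  next
    fix c x s assume "(x,s) \<in> {(t *\<^sub>R z, t * a) | t. True}"
    then obtain t1 where "x = t1 *\<^sub>R z" "s = t1 * a" by blast
    thus "(c *\<^sub>R x, c * s) \<in> {(t *\<^sub>R z, t * a) | t. True}"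
      by (intro CollectI exI[of _ "c * t1"]) simp
  next
    fix x s t assume "(x,s) \<in> {(t *\<^sub>R z, t * a) | t. True}" "(x,t) \<in> {(t *\<^sub>R z, t * a) | t. True}"
    then obtain t1 t2 where h: "x = t1 *\<^sub>R z" "s = t1 * a" "x = t2 *\<^sub>R z" "t = t2 * a" by blast
    have "t1 *\<^sub>R z = t2 *\<^sub>R z" using h(1,3) by auto
    hence "t1 = t2" using z by auto
    thus "s = t" using \<open>s = t1 * a\<close> \<open>t = t2 * a\<close> by simp
  next
    fix x s assume "(x,s) \<in> {(t *\<^sub>R z, t * a) | t. True}"
    then obtain t where h: "x = t *\<^sub>R z" "s = t * a" by blast
    show "s \<le> p x"
    proof (cases "t > 0")
      case True thus ?thesis using h hom[OF True, of z] a1 by (simp add: mult_left_mono)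
    next
      case False
      show ?thesis
      proof (cases "t = 0")
        case True thus ?thesis using h p0 by simp
      next
        case False
        hence r: "-t > 0" using \<open>\<not> t > 0\<close> by simp
        have "x = (-t) *\<^sub>R (-z)" using h by simp
        hence "p x = p ((-t) *\<^sub>R (-z))" by simp
        also have "\<dots> = (-t) * p (-z)" by (rule hom[OF r])
        finally have "p x = (-t) * p (-z)" .
        moreover have "(-t) * (-a) \<le> (-t) * p (-z)" by (rule mult_left_mono) (use r a2 in auto)
        ultimately show ?thesis using h by simp
      qed
    qed
  qed
  have "\<exists>M\<in>{G. graph_ok p z a G}. \<forall>X\<in>{G. graph_ok p z a G}. M \<subseteq> X \<longrightarrow> X = M"
  proof (rule Zorn_Lemma2, intro ballI)
    fix C assume C: "C \<in> chains {G. graph_ok p z a G}"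
    show "\<exists>U\<in>{G. graph_ok p z a G}. \<forall>X\<in>C. X \<subseteq> U"
    proof (cases "C = {}")
      case True thus ?thesis using G0 by blast
    next
      case False thus ?thesis using graph_ok_union[OF C False] by blast
    qed
  qed
  then obtain M where M: "graph_ok p z a M" and max: "\<And>X. graph_ok p z a X \<Longrightarrow> M \<subseteq> X \<Longrightarrow> X = M"
    by blast
  have full: "x \<in> fst ` M" for x
  proof (rule ccontr)
    assume "x \<notin> fst ` M"
    from hb_extend[OF sub hom M this] max show False by blast
  qed
  have Madd: "\<And>x s y t. (x,s) \<in> M \<Longrightarrow> (y,t) \<in> M \<Longrightarrow> (x+y, s+t) \<in> M"
    and Msc: "\<And>c x s. (x,s) \<in> M \<Longrightarrow> (c *\<^sub>R x, c * s) \<in> M"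
    and Mfun: "\<And>x s t. (x,s) \<in> M \<Longrightarrow> (x,t) \<in> M \<Longrightarrow> s = t"
    and Mdom: "\<And>x s. (x,s) \<in> M \<Longrightarrow> s \<le> p x" and Mz: "(z,a) \<in> M"
    using graph_okD[OF M] by blast+
  define f where "f x = (THE s. (x,s) \<in> M)" for x
  have fM: "(x, f x) \<in> M" for x
  proof -
    obtain s where s: "(x,s) \<in> M" using full[of x] by force
    have "f x = s" unfolding f_def using s Mfun by blast
    thus ?thesis using s by simp
  qed
  have feq: "f x = s" if "(x,s) \<in> M" for x s using Mfun[OF that fM] by simp
  have "linear f"
  proof (rule linearI)
    fix x y show "f (x + y) = f x + f y" using feq[OF Madd[OF fM fM]] by simp
  next
    fix c x show "f (c *\<^sub>R x) = c *\<^sub>R f x" using feq[OF Msc[OF fM]] by simp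
  qed
  moreover have "\<forall>x. f x \<le> p x" using Mdom[OF fM] by blast
  moreover have "f z = a" using feq[OF Mz] .
  ultimately show ?thesis by blast
qed

lemma linear_real_add: "linear (f :: 'a::real_vector \<Rightarrow> real) \<Longrightarrow> f (x + y) = f x + f y"
  by (simp add: linear_add)
lemma linear_real_scale: "linear (f :: 'a::real_vector \<Rightarrow> real) \<Longrightarrow> f (c *\<^sub>R x) = c * f x"
  by (simp add: linear_scale)
lemma linear_real_neg: "linear (f :: 'a::real_vector \<Rightarrow> real) \<Longrightarrow> f (- x) = - f x"
  by (simp add: linear_neg)

lemma linear_bounded_real:
  fixes f :: "'a::real_normed_vector \<Rightarrow> real"
  assumes "linear f" "\<And>x. f x \<le> K * norm x"
  shows "bounded_linear f"
proof (rule bounded_linear_intro[where K = K])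
  show "f (x + y) = f x + f y" for x y using linear_real_add[OF assms(1)] .
  show "f (r *\<^sub>R x) = r *\<^sub>R f x" for r x using linear_real_scale[OF assms(1)] by simp
  show "norm (f x) \<le> norm x * K" for x
  proof -
    have "- f x \<le> K * norm x" using assms(2)[of "-x"] linear_real_neg[OF assms(1)] by simp
    thus ?thesis using assms(2)[of x] by (simp add: abs_le_iff mult.commute)
  qed
qed

lemma norming_functional:
  fixes x :: "'a::real_normed_vector"
  assumes "x \<noteq> 0"
  shows "\<exists>f. bounded_linear f \<and> f x = norm x \<and> (\<forall>y. \<bar>f y\<bar> \<le> norm y)"
proof -
  obtain f where f: "linear f" "\<And>y. f y \<le> norm y" "f x = norm x"
    using hahn_banach[of norm x "norm x"] assms norm_triangle_ineq by fastforce
  have "\<bar>f y\<bar> \<le> norm y" for y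
    using f(2)[of y] f(2)[of "-y"] linear_real_neg[OF f(1)] by (simp add: abs_le_iff)
  moreover have "bounded_linear f" using linear_bounded_real[OF f(1), of 1] f(2) by simp
  ultimately show ?thesis using f(3) by blast
qed

lemma separation:
  fixes K :: "'a::real_normed_vector set"
  assumes "closed K" "convex K" "q \<notin> K"
  shows "\<exists>(f::'a \<Rightarrow> real) c. bounded_linear f \<and> (\<forall>k\<in>K. f k \<le> c) \<and> c < f q"
proof (cases "K = {}")
  case True
  have "bounded_linear (\<lambda>x::'a. 0::real)" by (rule bounded_linear_zero)
  thus ?thesis using True by (intro exI[of _ "\<lambda>x::'a. 0::real"] exI[of _ "-1::real"]) auto
next
  case False
  then obtain k0 where k0: "k0 \<in> K" by blast
  have "open (- K)" using assms(1) by auto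
  then obtain r where r: "r > 0" "ball q r \<subseteq> - K" using assms(3) open_contains_ball by blast
  define W where "W = {k - k0 + b | k b. k \<in> K \<and> norm b < r}"
  have W0: "0 \<in> W" unfolding W_def using k0 r by (intro CollectI exI[of _ k0] exI[of _ 0]) simp
  have Wball: "b \<in> W" if "norm b < r" for b unfolding W_def using k0 that
    by (intro CollectI exI[of _ k0] exI[of _ b]) simp
  have Wconv: "convex W" unfolding convex_def
  proof (intro allI impI ballI)
    fix x y u v :: real
    fix x y assume "x \<in> W" "y \<in> W"
    then obtain k1 b1 k2 b2 where h: "k1 \<in> K" "norm b1 < r" "x = k1 - k0 + b1"
      "k2 \<in> K" "norm b2 < r" "y = k2 - k0 + b2" unfolding W_def by blast
    fix u v :: real assume uv: "0 \<le> u" "0 \<le> v" "u + v = 1"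
    have "u *\<^sub>R k1 + v *\<^sub>R k2 \<in> K" using assms(2) h uv unfolding convex_def by blast
    moreover have "norm (u *\<^sub>R b1 + v *\<^sub>R b2) < r"
    proof -
      have "norm (u *\<^sub>R b1 + v *\<^sub>R b2) \<le> u * norm b1 + v * norm b2"
        using norm_triangle_ineq[of "u *\<^sub>R b1" "v *\<^sub>R b2"] uv by simp
      also have "\<dots> < r"
      proof (cases "u = 0")
        case True thus ?thesis using uv h by simp
      next
        case False
        hence "u * norm b1 < u * r" using uv h by simp
        moreover have "v * norm b2 \<le> v * r" using uv h by (simp add: mult_left_mono)
        ultimately have "u * norm b1 + v * norm b2 < u * r + v * r" by linarith
        also have "u * r + v * r = (u + v) * r" by (simp add: algebra_simps)
        finally show ?thesis using uv by simp
      qed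
      finally show ?thesis .
    qed
    moreover have "u *\<^sub>R x + v *\<^sub>R y = (u *\<^sub>R k1 + v *\<^sub>R k2) - k0 + (u *\<^sub>R b1 + v *\<^sub>R b2)"
    proof -
      have "u *\<^sub>R x + v *\<^sub>R y = u *\<^sub>R k1 + v *\<^sub>R k2 - (u + v) *\<^sub>R k0 + (u *\<^sub>R b1 + v *\<^sub>R b2)"
        unfolding h(3) h(6) by (simp add: algebra_simps)
      thus ?thesis using uv by simp
    qed
    ultimately show "u *\<^sub>R x + v *\<^sub>R y \<in> W" unfolding W_def by blast
  qed
  define z where "z = q - k0"
  have zW: "z \<notin> W"
  proof
    assume "z \<in> W"
    then obtain k b where "k \<in> K" "norm b < r" "z = k - k0 + b" unfolding W_def by blast
    hence "q = k + b" "k \<in> K" "norm b < r" unfolding z_def by (auto simp: algebra_simps)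
    hence "k \<in> ball q r" by (simp add: dist_norm)
    thus False using r \<open>k \<in> K\<close> by blast
  qed
  have z0: "z \<noteq> 0" using zW W0 by auto
  define T where "T x = {t. t > 0 \<and> inverse t *\<^sub>R x \<in> W}" for x
  define \<mu> where "\<mu> x = Inf (T x)" for x
  have Tne: "2 * norm x / r + 1 \<in> T x" for x
  proof -
    let ?t = "2 * norm x / r + 1"
    have tp: "?t > 0" using r by (simp add: add_nonneg_pos)
    have "norm (inverse ?t *\<^sub>R x) = norm x / ?t" using tp by (simp add: divide_inverse_commute)
    also have "\<dots> < r"
    proof -
      have "r * ?t = 2 * norm x + r" using r by (simp add: algebra_simps)
      hence "norm x < r * ?t" using r norm_ge_zero[of x] by linarith
      thus ?thesis using tp by (simp add: divide_less_eq)
    qed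
    finally show ?thesis unfolding T_def using tp Wball by blast
  qed
  have Tbdd: "bdd_below (T x)" for x unfolding T_def bdd_below_def by (rule exI[of _ 0]) auto
  have mu_le: "\<mu> x \<le> t" if "t \<in> T x" for x t unfolding \<mu>_def by (rule cInf_lower[OF that Tbdd])
  have mu_ge: "c \<le> \<mu> x" if "\<And>t. t \<in> T x \<Longrightarrow> c \<le> t" for x c
    unfolding \<mu>_def using Tne that by (intro cInf_greatest) blast+
  have mu_nonneg: "0 \<le> \<mu> x" for x by (rule mu_ge) (simp add: T_def)
  have mu_sub: "\<mu> (x + y) \<le> \<mu> x + \<mu> y" for x y
  proof -
    have "\<mu> (x + y) \<le> s + t" if s: "s \<in> T x" and t: "t \<in> T y" for s t
    proof (rule mu_le)
      have sp: "s > 0" "inverse s *\<^sub>R x \<in> W" and tp: "t > 0" "inverse t *\<^sub>R y \<in> W"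
        using s t unfolding T_def by auto
      have "(s / (s + t)) *\<^sub>R (inverse s *\<^sub>R x) + (t / (s + t)) *\<^sub>R (inverse t *\<^sub>R y) \<in> W"
      proof -
        have "s / (s + t) \<ge> 0" "t / (s + t) \<ge> 0" using sp tp by auto
        moreover have "s / (s + t) + t / (s + t) = 1" using sp tp by (simp add: add_divide_distrib[symmetric])
        ultimately show ?thesis using Wconv sp(2) tp(2) unfolding convex_def by blast
      qed
      moreover have "(s / (s + t)) *\<^sub>R (inverse s *\<^sub>R x) + (t / (s + t)) *\<^sub>R (inverse t *\<^sub>R y)
          = inverse (s + t) *\<^sub>R (x + y)"
      proof -
        have e1: "s / (s + t) * inverse s = inverse (s + t)" using sp tp by (simp add: field_simps)
        have e2: "t / (s + t) * inverse t = inverse (s + t)" using sp tp by (simp add: field_simps)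
        show ?thesis by (simp only: scaleR_scaleR e1 e2 scaleR_add_right)
      qed
      ultimately show "s + t \<in> T (x + y)" unfolding T_def using sp tp by auto
    qed
    hence "\<mu> (x + y) - t \<le> \<mu> x" if "t \<in> T y" for t using that by (intro mu_ge) (simp add: algebra_simps)
    hence "\<mu> (x + y) - \<mu> x \<le> \<mu> y" by (intro mu_ge) (simp add: algebra_simps)
    thus ?thesis by simp
  qed
  have mu_hom_le: "\<mu> (c *\<^sub>R x) \<le> c * \<mu> x" if c: "c > 0" for c x
  proof -
    have "\<mu> (c *\<^sub>R x) \<le> c * t" if "t \<in> T x" for t
    proof (rule mu_le)
      have tt: "t > 0" "inverse t *\<^sub>R x \<in> W" using that unfolding T_def by auto
      have eq: "inverse (c * t) *\<^sub>R (c *\<^sub>R x) = inverse t *\<^sub>R x" using c by simp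
      have "inverse (c * t) *\<^sub>R (c *\<^sub>R x) \<in> W" unfolding eq by (rule tt(2))
      moreover have "c * t > 0" using tt c by simp
      ultimately show "c * t \<in> T (c *\<^sub>R x)" unfolding T_def by blast
    qed
    hence "\<mu> (c *\<^sub>R x) / c \<le> \<mu> x" using c by (intro mu_ge) (simp add: divide_le_eq mult.commute)
    thus ?thesis using c by (simp add: divide_le_eq mult.commute)
  qed
  have mu_hom: "\<mu> (c *\<^sub>R x) = c * \<mu> x" if c: "c > 0" for c x
  proof -
    have "\<mu> x = \<mu> (inverse c *\<^sub>R (c *\<^sub>R x))" using c by simp
    also have "\<dots> \<le> inverse c * \<mu> (c *\<^sub>R x)" using c by (intro mu_hom_le) simp
    finally have "c * \<mu> x \<le> \<mu> (c *\<^sub>R x)" using c by (simp add: field_simps)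
    thus ?thesis using mu_hom_le[OF c, of x] by linarith
  qed
  have mu_bound: "\<mu> x \<le> (2 / r) * norm x" for x
  proof (cases "x = 0")
    case True
    have "\<mu> 0 = 2 * \<mu> 0" using mu_hom[of 2 0] by simp
    thus ?thesis using True by simp
  next
    case False
    let ?t = "2 * norm x / r"
    have tp: "?t > 0" using False r by simp
    have "norm (inverse ?t *\<^sub>R x) = r / 2" using tp r False by simp
    hence "?t \<in> T x" unfolding T_def using tp r Wball by auto
    thus ?thesis using mu_le by simp
  qed
  have mu_z: "1 \<le> \<mu> z"
  proof (rule ccontr)
    assume "\<not> 1 \<le> \<mu> z"
    hence "Inf (T z) < 1" unfolding \<mu>_def by simp
    then obtain t where t: "t \<in> T z" "t < 1" using cInf_lessD[of "T z" 1] Tne by blast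
    hence tp: "t > 0" "inverse t *\<^sub>R z \<in> W" unfolding T_def by auto
    have "t *\<^sub>R (inverse t *\<^sub>R z) + (1 - t) *\<^sub>R 0 \<in> W"
    proof -
      have "t \<ge> 0" "1 - t \<ge> 0" "t + (1 - t) = 1" using tp t(2) by auto
      thus ?thesis using Wconv tp(2) W0 unfolding convex_def by blast
    qed
    hence "z \<in> W" using tp by simp
    thus False using zW by simp
  qed
  have mu_W: "\<mu> w \<le> 1" if "w \<in> W" for w using mu_le[of 1 w] that unfolding T_def by simp
  obtain F where F: "linear F" "\<And>x. F x \<le> \<mu> x" "F z = 1"
    using hahn_banach[of \<mu> z 1, OF mu_sub mu_hom z0 mu_z] mu_nonneg[of "-z"] by auto
  have Fb: "bounded_linear F"
  proof (rule linear_bounded_real[OF F(1), of "2/r"])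
    fix x show "F x \<le> 2 / r * norm x" using F(2)[of x] mu_bound[of x] by linarith
  qed
  define b0 where "b0 = (r / (2 * norm z)) *\<^sub>R z"
  have nb0: "norm b0 < r" unfolding b0_def using r z0 by simp
  have Fb0: "F b0 = r / (2 * norm z)" unfolding b0_def using linear_real_scale[OF F(1)] F(3) by simp
  have eta: "r / (2 * norm z) > 0" using r z0 by simp
  have "F k \<le> F k0 + 1 - r / (2 * norm z)" if "k \<in> K" for k
  proof -
    have "k - k0 + b0 \<in> W" unfolding W_def using that nb0 by blast
    hence "F (k - k0 + b0) \<le> 1" using F(2)[of "k - k0 + b0"] mu_W by fastforce
    moreover have "F (k - k0 + b0) = F k - F k0 + F b0"
    proof -
      have "F (k - k0 + b0) = F (k - k0) + F b0" by (rule linear_real_add[OF F(1)])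
      also have "F (k - k0) = F k - F k0" by (rule linear_diff[OF F(1)])
      finally show ?thesis .
    qed
    ultimately show ?thesis using Fb0 by simp
  qed
  moreover have "F q = F k0 + 1"
  proof -
    have "q = z + k0" unfolding z_def by simp
    thus ?thesis using linear_real_add[OF F(1)] F(3) by simp
  qed
  ultimately show ?thesis using Fb eta by (intro exI[of _ F] exI[of _ "F k0 + 1 - r / (2 * norm z)"]) auto
qed

lemma weak_topspace [simp]: "topspace (weak_topology :: 'a::real_normed_vector topology) = UNIV"
proof -
  have "(UNIV::'a set) \<in> {f -` U | (f :: 'a \<Rightarrow> real) U. bounded_linear f \<and> open U}"
    by (intro CollectI exI[of _ "\<lambda>x::'a. 0::real"] exI[of _ "UNIV::real set"]) (auto intro: bounded_linear_zero)
  thus ?thesis unfolding weak_topology_def topology_generated_by_topspace by blast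
qed

lemma weak_open_basic:
  fixes f :: "'a::real_normed_vector \<Rightarrow> real"
  assumes "bounded_linear f" "open U"
  shows "openin weak_topology (f -` U)"
  unfolding weak_topology_def by (rule topology_generated_by_Basis) (use assms in blast)

lemma weak_open_halfspace:
  fixes f :: "'a::real_normed_vector \<Rightarrow> real"
  assumes "bounded_linear f"
  shows "openin weak_topology {x. c < f x}"
proof -
  have "{x. c < f x} = f -` {c<..}" by auto
  thus ?thesis using weak_open_basic[OF assms, of "{c<..}"] by simp
qed

lemma weak_openin_open:
  assumes "openin (weak_topology :: 'a::real_normed_vector topology) S"
  shows "open S"
proof -
  have "generate_topology_on {f -` U | (f :: 'a \<Rightarrow> real) U. bounded_linear f \<and> open U} S"
    using assms unfolding weak_topology_def by (rule openin_topology_generated_by)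
  thus ?thesis
  proof (induction rule: generate_topology_on.induct)
    case Empty then show ?case by simp
  next
    case (Int a b) then show ?case by (simp add: open_Int)
  next
    case (UN K) then show ?case by (simp add: open_Union)
  next
    case (Basis s)
    then obtain f U where h: "s = f -` U" "bounded_linear (f :: 'a \<Rightarrow> real)" "open U" by blast
    have "continuous_on UNIV f" using h(2) by (simp add: linear_continuous_on)
    thus ?case using h open_vimage by blast
  qed
qed

lemma weak_closedin_closed:
  assumes "closedin (weak_topology :: 'a::real_normed_vector topology) S"
  shows "closed S"
proof -
  have "openin weak_topology (UNIV - S)" using assms unfolding closedin_def by simp
  hence "open (UNIV - S)" by (rule weak_openin_open)
  thus ?thesis by (simp add: closed_def Compl_eq_Diff_UNIV)
qed

lemma closed_convex_weakly_closed:
  fixes K :: "'a::real_normed_vector set"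
  assumes "closed K" "convex K"
  shows "closedin weak_topology K"
proof -
  have "openin weak_topology (UNIV - K)"
  proof (subst openin_subopen, intro ballI)
    fix q assume "q \<in> UNIV - K"
    then obtain f :: "'a \<Rightarrow> real" and c where f: "bounded_linear f" "\<forall>k\<in>K. f k \<le> c" "c < f q"
      using separation[OF assms] by blast
    show "\<exists>T. openin weak_topology T \<and> q \<in> T \<and> T \<subseteq> UNIV - K"
      using weak_open_halfspace[OF f(1), of c] f(2,3) by (intro exI[of _ "{x. c < f x}"]) force
  qed
  thus ?thesis unfolding closedin_def by simp
qed

lemma weak_hausdorff: "Hausdorff_space (weak_topology :: 'a::real_normed_vector topology)"
  unfolding Hausdorff_space_def
proof (intro allI impI)
  fix x y :: 'a assume "x \<in> topspace weak_topology \<and> y \<in> topspace weak_topology \<and> x \<noteq> y"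
  hence "x \<notin> {y}" by simp
  then obtain f :: "'a \<Rightarrow> real" and c where f: "bounded_linear f" "\<forall>k\<in>{y}. f k \<le> c" "c < f x"
    using separation[of "{y}" x] by auto
  define m where "m = (c + f x) / 2"
  have bl: "bounded_linear (\<lambda>v. - f v)" using f(1) by (rule bounded_linear_minus)
  have "openin weak_topology {v. m < f v}" by (rule weak_open_halfspace[OF f(1)])
  moreover have "openin weak_topology {v. - m < - f v}" by (rule weak_open_halfspace[OF bl])
  moreover have "x \<in> {v. m < f v}" "y \<in> {v. - m < - f v}" using f unfolding m_def by auto
  moreover have "disjnt {v. m < f v} {v. - m < - f v}" unfolding disjnt_def by auto
  ultimately show "\<exists>U V. openin weak_topology U \<and> openin weak_topology V \<and> x \<in> U \<and> y \<in> V \<and> disjnt U V"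
    by blast
qed

lemma weakly_compact_closed:
  fixes K :: "'a::real_normed_vector set"
  assumes "weakly_compact K" shows "closed K"
  using assms unfolding weakly_compact_def
  by (intro weak_closedin_closed compactin_imp_closedin weak_hausdorff)

lemma weakly_compact_Int:
  fixes K :: "'a::real_normed_vector set"
  assumes "weakly_compact K" "closed C" "convex C"
  shows "weakly_compact (C \<inter> K)"
  using assms unfolding weakly_compact_def
  by (intro closed_Int_compactin closed_convex_weakly_closed)

lemma weakly_compact_image_bounded:
  fixes f :: "'a::real_normed_vector \<Rightarrow> real"
  assumes "weakly_compact K" "bounded_linear f"
  shows "bounded (f ` K)"
proof -
  have "continuous_map weak_topology euclideanreal f"
    unfolding continuous_map
  proof (intro conjI allI impI)
    show "f ` topspace weak_topology \<subseteq> topspace euclideanreal" by simp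
    fix U assume "openin euclideanreal U"
    hence "open U" by simp
    have "{x \<in> topspace weak_topology. f x \<in> U} = f -` U" by auto
    thus "openin weak_topology {x \<in> topspace weak_topology. f x \<in> U}"
      using weak_open_basic[OF assms(2) \<open>open U\<close>] by simp
  qed
  hence "compactin euclideanreal (f ` K)"
    using assms(1) unfolding weakly_compact_def by (rule image_compactin[rotated])
  thus ?thesis by (simp add: compact_imp_bounded)
qed

lemma weakly_compact_bounded:
  fixes K :: "'a::banach set"
  assumes K: "weakly_compact K"
  shows "bounded K"
proof -
  define E where "E n = {g :: 'a \<Rightarrow>\<^sub>L real. \<forall>x\<in>K. \<bar>blinfun_apply g x\<bar> \<le> real n}" for n :: nat
  have Eclosed: "closed (E n)" for n
  proof -
    have "E n = (\<Inter>x\<in>K. {g :: 'a \<Rightarrow>\<^sub>L real. \<bar>blinfun_apply g x\<bar> \<le> real n})" unfolding E_def by auto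
    moreover have "closed {g :: 'a \<Rightarrow>\<^sub>L real. \<bar>blinfun_apply g x\<bar> \<le> real n}" for x
    proof (rule closed_Collect_le)
      show "continuous_on UNIV (\<lambda>g :: 'a \<Rightarrow>\<^sub>L real. \<bar>blinfun_apply g x\<bar>)"
        by (intro continuous_on_rabs linear_continuous_on blinfun.bounded_linear_left)
    qed simp
    ultimately show ?thesis by auto
  qed
  have Ecover: "\<exists>n. g \<in> E n" for g
  proof -
    have "bounded ((blinfun_apply g) ` K)"
      by (rule weakly_compact_image_bounded[OF K]) (rule blinfun.bounded_linear_right)
    then obtain B where B: "\<forall>y\<in>(blinfun_apply g) ` K. norm y \<le> B" unfolding bounded_iff by blast
    have "\<forall>x\<in>K. \<bar>blinfun_apply g x\<bar> \<le> real (nat \<lceil>B\<rceil>)"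
    proof
      fix x assume "x \<in> K"
      hence "norm (blinfun_apply g x) \<le> B" using B by blast
      thus "\<bar>blinfun_apply g x\<bar> \<le> real (nat \<lceil>B\<rceil>)" using real_nat_ceiling_ge[of B] unfolding real_norm_def by linarith
    qed
    thus ?thesis unfolding E_def by blast
  qed
  have "\<exists>n. interior (E n) \<noteq> {}"
  proof (rule ccontr)
    assume "\<not> (\<exists>n. interior (E n) \<noteq> {})"
    hence emp: "\<And>n. interior (E n) = {}" by blast
    have "Met_TC.mtopology interior_of \<Union>(range E) = {}"
    proof (rule Met_TC.metric_Baire_category_alt)
      show "Met_TC.mcomplete TYPE('a \<Rightarrow>\<^sub>L real)" by (simp add: complete_UNIV)
      show "countable (range E)" by simp
      fix T assume "T \<in> range E"
      then obtain n where "T = E n" by blast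
      thus "closedin Met_TC.mtopology T \<and> Met_TC.mtopology interior_of T = {}"
        using Eclosed emp by simp
    qed
    moreover have "\<Union>(range E) = UNIV" using Ecover by blast
    ultimately show False by simp
  qed
  then obtain n g0 where "g0 \<in> interior (E n)" by blast
  then obtain e where e: "e > 0" "ball g0 e \<subseteq> E n" using mem_interior by blast
  have "norm x \<le> 4 * real n / e" if x: "x \<in> K" for x
  proof (cases "x = 0")
    case True thus ?thesis using e by simp
  next
    case False
    then obtain f where f: "bounded_linear f" "f x = norm x" "\<forall>y. \<bar>f y\<bar> \<le> norm y"
      using norming_functional by blast
    define h where "h = Blinfun f"
    have hf: "blinfun_apply h = f" unfolding h_def using f(1) by (rule bounded_linear_Blinfun_apply)
    have nh: "norm h \<le> 1"
      by (rule norm_blinfun_bound) (use f(3) hf in simp_all)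
    define g where "g = g0 + (e/2) *\<^sub>R h"
    have "dist g g0 < e"
    proof -
      have "dist g g0 = norm ((e/2) *\<^sub>R h)" unfolding g_def dist_norm by simp
      also have "\<dots> = (e/2) * norm h" using e by simp
      also have "\<dots> \<le> e/2" using nh e by (simp add: mult_left_le)
      finally show ?thesis using e by simp
    qed
    hence "g \<in> E n" "g0 \<in> E n" using e by (auto simp: dist_commute)
    hence "\<bar>blinfun_apply g x\<bar> \<le> real n" "\<bar>blinfun_apply g0 x\<bar> \<le> real n" using x unfolding E_def by auto
    moreover have "blinfun_apply g x = blinfun_apply g0 x + (e/2) * norm x"
      unfolding g_def using hf f(2) by (simp add: blinfun.bilinear_simps)
    ultimately have "(e/2) * norm x \<le> 2 * real n" by linarith
    thus ?thesis using e by (simp add: field_simps)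
  qed
  thus ?thesis unfolding bounded_iff by blast
qed

lemma rad_upper:
  fixes A :: "'a::real_normed_vector set"
  assumes "bounded A" "y \<in> A"
  shows "norm (x - y) \<le> rad x A"
proof -
  obtain B where B: "\<forall>y\<in>A. norm y \<le> B" using assms(1) unfolding bounded_iff by blast
  have "bdd_above ((\<lambda>y. norm (x - y)) ` A)"
  proof (rule bdd_aboveI2)
    fix y assume "y \<in> A"
    hence "norm y \<le> B" using B by blast
    thus "norm (x - y) \<le> norm x + B" using norm_triangle_ineq4[of x y] by linarith
  qed
  thus ?thesis unfolding rad_def by (rule cSUP_upper[OF assms(2)])
qed

lemma rad_least:
  fixes A :: "'a::real_normed_vector set"
  assumes "A \<noteq> {}" "\<And>y. y \<in> A \<Longrightarrow> norm (x - y) \<le> c"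
  shows "rad x A \<le> c"
  unfolding rad_def by (rule cSUP_least[OF assms(1) assms(2)])

lemma rad_mono:
  fixes A :: "'a::real_normed_vector set"
  assumes "bounded B" "A \<noteq> {}" "A \<subseteq> B"
  shows "rad x A \<le> rad x B"
proof (rule rad_least[OF assms(2)])
  fix y assume "y \<in> A"
  thus "norm (x - y) \<le> rad x B" using rad_upper[OF assms(1)] assms(3) by blast
qed

lemma orbit_iter: "(T ^^ n) x \<in> orbit T x"
  unfolding orbit_def by (rule range_eqI) (rule refl)

lemma orbit_self: "x \<in> orbit T x"
  using orbit_iter[of 0 T x] by simp

lemma iter_in: "T ` C \<subseteq> C \<Longrightarrow> x \<in> C \<Longrightarrow> (T ^^ n) x \<in> C"
proof (induction n)
  case 0 thus ?case by simp
next
  case (Suc n) thus ?case by (simp add: image_subset_iff)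
qed

lemma orbit_sub: "T ` C \<subseteq> C \<Longrightarrow> x \<in> C \<Longrightarrow> orbit T x \<subseteq> C"
  unfolding orbit_def by (auto intro: iter_in)

lemma hull_closure_cball:
  fixes S :: "'a::real_normed_vector set"
  assumes "S \<subseteq> cball x r"
  shows "closure (convex hull S) \<subseteq> cball x r"
proof -
  have "convex hull S \<subseteq> cball x r" by (rule hull_minimal[where S=convex, OF assms convex_cball[of x r]])
  thus ?thesis by (rule closure_minimal[OF _ closed_cball])
qed

lemma nested_nonempty:
  assumes "compactin X S" "\<And>n. closedin X (D n)" "\<And>n. D n \<noteq> {}"
    "\<And>n. D (Suc n) \<subseteq> D n" "\<And>n. D n \<subseteq> S"
  shows "\<Inter>(range D) \<noteq> {}"
proof -
  have dec: "D n \<subseteq> D m" if "m \<le> n" for m n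
    using lift_Suc_antimono_le[of D, OF assms(4) that] .
  have "S \<inter> \<Inter>(range D) \<noteq> {}"
  proof -
    have "\<forall>\<F>. finite \<F> \<and> \<F> \<subseteq> range D \<longrightarrow> S \<inter> \<Inter>\<F> \<noteq> {}"
    proof (intro allI impI)
      fix \<F> assume F: "finite \<F> \<and> \<F> \<subseteq> range D"
      then obtain N where N: "N \<subseteq> UNIV" "finite N" "\<F> = D ` N"
        using finite_subset_image[of \<F> D UNIV] by blast
      define m where "m = Max (insert 0 N)"
      have "D m \<subseteq> \<Inter>\<F>"
      proof
        fix x assume "x \<in> D m"
        show "x \<in> \<Inter>\<F>"
        proof
          fix G assume "G \<in> \<F>"
          then obtain k where "k \<in> N" "G = D k" using N(3) by blast
          hence "k \<le> m" unfolding m_def using N(2) by simp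
          thus "x \<in> G" using dec \<open>G = D k\<close> \<open>x \<in> D m\<close> by blast
        qed
      qed
      moreover obtain x where "x \<in> D m" using assms(3) by blast
      ultimately show "S \<inter> \<Inter>\<F> \<noteq> {}" using assms(5) by blast
    qed
    moreover have "\<forall>C\<in>range D. closedin X C" using assms(2) by blast
    ultimately show ?thesis using compactin_fip[THEN iffD1, OF assms(1)] by blast
  qed
  thus ?thesis by blast
qed

lemma fixed_point_exists:
  fixes C :: "'a::banach set"
  assumes wns: "weak_normal_structure TYPE('a)"
    and wc: "weakly_compact C" and cv: "convex C" and ne: "C \<noteq> {}" and TC: "T ` C \<subseteq> C"
    and kan: "orbitally_kannan C T" and dim: "diminishes_radius_of_orbits C T"
  shows "\<exists>x\<in>C. T x = x"
proof -
  define \<phi> where "\<phi> x = rad x (orbit T x)" for x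
  have bC: "bounded C" using wc by (rule weakly_compact_bounded)
  have cC: "closed C" using wc by (rule weakly_compact_closed)
  have borb: "bounded (orbit T x)" if "x \<in> C" for x using bounded_subset[OF bC orbit_sub[OF TC that]] .
  have P1: "norm (x - (T ^^ n) x) \<le> \<phi> x" if "x \<in> C" for x n
    unfolding \<phi>_def by (rule rad_upper[OF borb[OF that] orbit_iter])
  have P2: "\<phi> x \<le> c" if "x \<in> C" "\<And>n. norm (x - (T ^^ n) x) \<le> c" for x c
    unfolding \<phi>_def by (rule rad_least) (use orbit_self that in \<open>auto simp: orbit_def\<close>)
  have phi0: "0 \<le> \<phi> x" if "x \<in> C" for x using P1[OF that, of 0] by simp
  have dim1: "\<phi> (T x) \<le> \<phi> x" if "x \<in> C" for x using dim that unfolding diminishes_radius_of_orbits_def \<phi>_def by blast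
  have dimn: "\<phi> ((T ^^ n) x) \<le> \<phi> x" if "x \<in> C" for x n
  proof (induction n)
    case 0 show ?case by simp
  next
    case (Suc n)
    have "\<phi> ((T ^^ Suc n) x) = \<phi> (T ((T ^^ n) x))" by simp
    also have "\<dots> \<le> \<phi> ((T ^^ n) x)" by (rule dim1[OF iter_in[OF TC that]])
    finally show ?case using Suc by simp
  qed
  have Kan: "norm (T x - T y) \<le> (\<phi> x + \<phi> y) / 2" if "x \<in> C" "y \<in> C" for x y
    using kan that unfolding orbitally_kannan_def \<phi>_def by blast
  have KEY: "\<phi> z \<le> c" if S: "S \<subseteq> C" "S \<noteq> {}" "\<And>y. y \<in> S \<Longrightarrow> \<phi> y \<le> c"
     and z: "z \<in> C" "z \<in> closure (convex hull (T ` S))" for S c z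
  proof -
    define R where "R = (\<phi> z + c) / 2"
    obtain y0 where "y0 \<in> S" using S(2) by blast
    hence c0: "0 \<le> c" using S phi0 order_trans by blast
    have "norm (z - (T ^^ n) z) \<le> R" for n
    proof (cases n)
      case 0 thus ?thesis using phi0[OF z(1)] c0 unfolding R_def by simp
    next
      case (Suc m)
      define w where "w = (T ^^ m) z"
      have wC: "w \<in> C" unfolding w_def by (rule iter_in[OF TC z(1)])
      have "T ` S \<subseteq> cball (T w) R"
      proof
        fix u assume "u \<in> T ` S"
        then obtain y where y: "y \<in> S" "u = T y" by blast
        have "norm (T w - T y) \<le> (\<phi> w + \<phi> y) / 2" using Kan wC S(1) y(1) by blast
        also have "\<dots> \<le> R" unfolding R_def using dimn[OF z(1), of m] S(3)[OF y(1)] unfolding w_def by simp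
        finally show "u \<in> cball (T w) R" using y by (simp add: dist_norm)
      qed
      hence "z \<in> cball (T w) R" using hull_closure_cball z(2) by blast
      hence "norm (T w - z) \<le> R" by (simp add: dist_norm)
      moreover have "(T ^^ n) z = T w" unfolding w_def Suc by simp
      ultimately show ?thesis by (simp add: norm_minus_commute)
    qed
    hence "\<phi> z \<le> R" by (rule P2[OF z(1)])
    thus ?thesis unfolding R_def by simp
  qed
  define \<rho> where "\<rho> = Inf (\<phi> ` C)"
  have bddphi: "bdd_below (\<phi> ` C)" using phi0 by (intro bdd_belowI2) auto
  have rho_le: "\<rho> \<le> \<phi> x" if "x \<in> C" for x unfolding \<rho>_def using bddphi that by (simp add: cInf_lower)
  have rho0: "0 \<le> \<rho>" unfolding \<rho>_def using ne phi0 by (intro cInf_greatest) auto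
  define A where "A e = {y \<in> C. \<phi> y \<le> \<rho> + e}" for e
  have Ane: "A e \<noteq> {}" if "e > 0" for e
  proof -
    have lt: "Inf (\<phi> ` C) < \<rho> + e" using that unfolding \<rho>_def by simp
    have ne': "\<phi> ` C \<noteq> {}" using ne by blast
    obtain v where "v \<in> \<phi> ` C" "v < \<rho> + e" using cInf_lessD[OF ne' lt] by blast
    then obtain y where "y \<in> C" "\<phi> y < \<rho> + e" by blast
    hence "y \<in> A e" unfolding A_def by simp
    thus ?thesis by blast
  qed
  define D where "D e = C \<inter> closure (convex hull (T ` A e))" for e
  have AC: "A e \<subseteq> C" for e unfolding A_def by blast
  have DA: "D e \<subseteq> A e" if "e > 0" for e
  proof
    fix z assume "z \<in> D e"
    hence z: "z \<in> C" "z \<in> closure (convex hull (T ` A e))" unfolding D_def by auto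
    have "\<phi> z \<le> \<rho> + e" by (rule KEY[OF AC Ane[OF that] _ z]) (simp add: A_def)
    thus "z \<in> A e" unfolding A_def using z by blast
  qed
  have TAD: "T ` A e \<subseteq> D e" for e
  proof -
    have "T ` A e \<subseteq> C" using TC AC by blast
    moreover have "T ` A e \<subseteq> closure (convex hull (T ` A e))"
      by (rule order_trans[OF hull_subset closure_subset])
    ultimately show ?thesis unfolding D_def by blast
  qed
  have TD: "T ` D e \<subseteq> D e" if "e > 0" for e using DA[OF that] TAD by blast
  have Dne: "D e \<noteq> {}" if "e > 0" for e using TAD[of e] Ane[OF that] by blast
  have Dmono: "D e \<subseteq> D e'" if "e \<le> e'" for e e'
  proof -
    have "A e \<subseteq> A e'" unfolding A_def using that by auto
    hence "closure (convex hull (T ` A e)) \<subseteq> closure (convex hull (T ` A e'))"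
      by (intro closure_mono hull_mono image_mono)
    thus ?thesis unfolding D_def by blast
  qed
  have Dclosed: "closed (D e)" for e unfolding D_def by (rule closed_Int[OF cC closed_closure])
  have Dconvex: "convex (D e)" for e unfolding D_def by (rule convex_Int[OF cv convex_closure[OF convex_convex_hull]])
  have Dwc: "weakly_compact (D e)" for e
  proof -
    have "weakly_compact (closure (convex hull (T ` A e)) \<inter> C)"
      by (rule weakly_compact_Int[OF wc closed_closure convex_closure[OF convex_convex_hull]])
    thus ?thesis unfolding D_def by (simp add: Int_commute)
  qed
  have Ddiam: "norm (x - y) \<le> \<rho> + e" if "e > 0" "x \<in> D e" "y \<in> D e" for e x y
  proof -
    have "T ` A e \<subseteq> cball u (\<rho> + e)" if "u \<in> T ` A e" for u
    proof
      fix v assume "v \<in> T ` A e"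
      then obtain a b where ab: "a \<in> A e" "b \<in> A e" "u = T a" "v = T b" using \<open>u \<in> T ` A e\<close> by blast
      have "norm (T a - T b) \<le> (\<phi> a + \<phi> b) / 2" using Kan AC ab by blast
      also have "\<dots> \<le> \<rho> + e" using ab unfolding A_def by simp
      finally show "v \<in> cball u (\<rho> + e)" using ab by (simp add: dist_norm)
    qed
    hence cl: "closure (convex hull (T ` A e)) \<subseteq> cball u (\<rho> + e)" if "u \<in> T ` A e" for u
      using hull_closure_cball that by blast
    have xcl: "x \<in> closure (convex hull (T ` A e))" using that(2) unfolding D_def by blast
    have "T ` A e \<subseteq> cball x (\<rho> + e)"
    proof
      fix u assume "u \<in> T ` A e"
      hence "x \<in> cball u (\<rho> + e)" using cl xcl by blast
      thus "u \<in> cball x (\<rho> + e)" by (simp add: dist_commute)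
    qed
    hence "closure (convex hull (T ` A e)) \<subseteq> cball x (\<rho> + e)" by (rule hull_closure_cball)
    thus ?thesis using that(3) unfolding D_def by (auto simp: dist_norm)
  qed
  define Dn where "Dn n = D (inverse (real (Suc n)))" for n
  define H where "H = \<Inter>(range Dn)"
  have Hne: "H \<noteq> {}" unfolding H_def
  proof (rule nested_nonempty[of weak_topology C])
    show "compactin weak_topology C" using wc unfolding weakly_compact_def .
    show "closedin weak_topology (Dn n)" for n unfolding Dn_def by (rule closed_convex_weakly_closed[OF Dclosed Dconvex])
    show "Dn n \<noteq> {}" for n unfolding Dn_def by (rule Dne) simp
    show "Dn (Suc n) \<subseteq> Dn n" for n unfolding Dn_def by (rule Dmono) (simp add: field_simps)
    show "Dn n \<subseteq> C" for n unfolding Dn_def D_def by blast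
  qed
  have HC: "H \<subseteq> C" unfolding H_def Dn_def D_def by blast
  have small: "a \<le> \<rho>" if "\<And>n. a \<le> \<rho> + inverse (real (Suc n))" for a
  proof (rule ccontr)
    assume "\<not> a \<le> \<rho>"
    hence "0 < a - \<rho>" by simp
    from reals_Archimedean[OF this] obtain n where "inverse (real (Suc n)) < a - \<rho>" by blast
    thus False using that[of n] by simp
  qed
  have Hphi: "\<phi> x = \<rho>" if "x \<in> H" for x
  proof -
    have "\<phi> x \<le> \<rho> + inverse (real (Suc n))" for n
      using that DA[of "inverse (real (Suc n))"] unfolding H_def Dn_def A_def by auto
    hence "\<phi> x \<le> \<rho>" by (rule small)
    moreover have "\<rho> \<le> \<phi> x" by (rule rho_le) (use HC that in blast)
    ultimately show ?thesis by linarith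
  qed
  have TH: "T ` H \<subseteq> H"
  proof
    fix y assume "y \<in> T ` H"
    then obtain x where x: "x \<in> H" "y = T x" by blast
    have "y \<in> Dn n" for n
    proof -
      have "x \<in> Dn n" using x(1) unfolding H_def by blast
      hence "T x \<in> Dn n" using TD[of "inverse (real (Suc n))"] unfolding Dn_def by auto
      thus ?thesis using x(2) by simp
    qed
    thus "y \<in> H" unfolding H_def by blast
  qed
  have iterH: "(T ^^ n) x \<in> H" if "x \<in> H" for x n using iter_in[OF TH that] .
  have Hclosed: "closed H" unfolding H_def by (rule closed_INT) (simp add: Dn_def Dclosed)
  have Hconvex: "convex H" unfolding H_def by (rule convex_INT) (simp add: Dn_def Dconvex)
  have Hdiam: "norm (x - y) \<le> \<rho>" if "x \<in> H" "y \<in> H" for x y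
  proof -
    have "norm (x - y) \<le> \<rho> + inverse (real (Suc n))" for n
      using that Ddiam[of "inverse (real (Suc n))" x y] unfolding H_def Dn_def by auto
    thus ?thesis by (rule small)
  qed
  obtain x0 where x0: "x0 \<in> H" using Hne by blast
  show ?thesis
  proof (cases "\<rho> = 0")
    case True
    have "norm (x0 - (T ^^ 1) x0) \<le> 0" using P1[of x0 1] HC x0 Hphi[OF x0] True by auto
    hence "T x0 = x0" by simp
    thus ?thesis using x0 HC by blast
  next
    case False
    hence rpos: "\<rho> > 0" using rho0 by simp
    have x0C: "x0 \<in> C" using HC x0 by blast
    have "\<exists>n. norm (x0 - (T ^^ n) x0) > 0"
    proof (rule ccontr)
      assume "\<not> (\<exists>n. norm (x0 - (T ^^ n) x0) > 0)"
      hence all: "norm (x0 - (T ^^ n) x0) \<le> 0" for n by (simp add: not_less)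
      have "\<phi> x0 \<le> 0" by (rule P2[OF x0C]) (rule all)
      thus False using Hphi[OF x0] rpos by simp
    qed
    then obtain n where n: "norm (x0 - (T ^^ n) x0) > 0" by blast
    define x1 where "x1 = (T ^^ n) x0"
    have x1: "x1 \<in> H" unfolding x1_def by (rule iterH[OF x0])
    have bH: "bounded H" using bounded_subset[OF bC HC] .
    have "0 < dist x0 x1" using n unfolding x1_def by (simp add: dist_norm)
    also have "dist x0 x1 \<le> diameter H" by (rule diameter_bounded_bound[OF bH x0 x1])
    finally have dpos: "diameter H > 0" .
    have dle: "diameter H \<le> \<rho>"
    proof (rule diameter_le)
      show "H \<noteq> {} \<or> 0 \<le> \<rho>" using rho0 by simp
      show "norm (x - y) \<le> \<rho>" if "x \<in> H" "y \<in> H" for x y using Hdiam[OF that] .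
    qed
    have "x0 \<noteq> x1" using n unfolding x1_def by auto
    have wns': "\<forall>K :: 'a set. weakly_compact K \<and> convex K \<and> (\<exists>x\<in>K. \<exists>y\<in>K. x \<noteq> y) \<longrightarrow> normal_structure K"
      using wns unfolding weak_normal_structure_def by simp
    have "\<exists>x\<in>C. \<exists>y\<in>C. x \<noteq> y" using x0C HC x1 \<open>x0 \<noteq> x1\<close> by blast
    hence "normal_structure C" using wns' wc cv by blast
    hence ns: "\<forall>K0. K0 \<subseteq> C \<and> closed K0 \<and> convex K0 \<and> diameter K0 > 0 \<longrightarrow> (\<exists>x0\<in>K0. rad x0 K0 < diameter K0)"
      unfolding normal_structure_def by simp
    have "H \<subseteq> C \<and> closed H \<and> convex H \<and> diameter H > 0" using HC Hclosed Hconvex dpos by simp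
    with ns obtain x2 where x2: "x2 \<in> H" "rad x2 H < diameter H" by blast
    have osub: "orbit T x2 \<subseteq> H"
    proof
      fix y assume "y \<in> orbit T x2"
      then obtain m where "y = (T ^^ m) x2" unfolding orbit_def by blast
      thus "y \<in> H" using iterH[OF x2(1)] by simp
    qed
    have "\<phi> x2 \<le> rad x2 H" unfolding \<phi>_def
      by (rule rad_mono[OF bH _ osub]) (use orbit_self[of x2 T] in auto)
    thus ?thesis using x2 dle Hphi[OF x2(1)] by simp
  qed
qed

lemma fixed_point_unique:
  fixes C :: "'a::real_normed_vector set"
  assumes kan: "orbitally_kannan C T" and "x \<in> C" "y \<in> C" "T x = x" "T y = y"
  shows "x = y"
proof -
  have orb: "orbit T u = {u}" if "T u = u" for u
  proof -
    have "(T ^^ n) u = u" for n by (induction n) (simp_all add: that)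
    thus ?thesis unfolding orbit_def by auto
  qed
  have "rad u {u} = 0" for u :: 'a unfolding rad_def by simp
  have "norm (T x - T y) \<le> (rad x (orbit T x) + rad y (orbit T y)) / 2"
    using kan assms(2,3) unfolding orbitally_kannan_def by blast
  hence "norm (T x - T y) \<le> 0" using orb[OF assms(4)] orb[OF assms(5)] \<open>\<And>u. rad u {u} = 0\<close> by simp
  thus ?thesis using assms(4,5) by simp
qed

definition avg :: "'a::real_vector set \<Rightarrow> 'a" where
  "avg S = inverse (real (card S)) *\<^sub>R (\<Sum>v\<in>S. v)"

lemma avg_in_hull:
  fixes S :: "'a::real_vector set"
  assumes "finite S" "S \<noteq> {}"
  shows "avg S \<in> convex hull S"
proof -
  have k: "real (card S) > 0" using assms by (simp add: card_gt_0_iff)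
  let ?u = "\<lambda>v::'a. inverse (real (card S))"
  have h1: "\<forall>x\<in>S. 0 \<le> ?u x" by simp
  have h2: "sum ?u S = 1" using k by simp
  have h3: "(\<Sum>v\<in>S. ?u v *\<^sub>R v) = avg S" unfolding avg_def by (rule scaleR_sum_right[symmetric])
  have "\<exists>u. (\<forall>x\<in>S. 0 \<le> u x) \<and> sum u S = 1 \<and> (\<Sum>v\<in>S. u v *\<^sub>R v) = avg S"
    using h1 h2 h3 by (intro exI[of _ ?u]) simp
  thus ?thesis unfolding convex_hull_finite[OF assms(1)] by (rule CollectI)
qed

lemma avg_far:
  fixes S :: "'a::real_normed_vector set"
  assumes fin: "finite S" and ne: "S \<noteq> {}" and bd: "\<And>v. v \<in> S \<Longrightarrow> norm (s - v) \<le> d"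
    and far: "d - \<eta> \<le> norm (s - avg S)" and y: "y \<in> convex hull S"
  shows "d - real (card S) * \<eta> \<le> norm (s - y)"
proof -
  have "\<exists>u. (\<forall>x\<in>S. 0 \<le> u x) \<and> sum u S = 1 \<and> (\<Sum>v\<in>S. u v *\<^sub>R v) = y"
    using y unfolding convex_hull_finite[OF fin] by (rule CollectD)
  then obtain u where u: "\<forall>x\<in>S. 0 \<le> u x" "sum u S = 1" "(\<Sum>v\<in>S. u v *\<^sub>R v) = y"
    by (elim exE conjE) simp
  define k where "k = real (card S)"
  have k: "k > 0" using fin ne unfolding k_def by (simp add: card_gt_0_iff)
  have u1: "u v \<le> 1" if "v \<in> S" for v
  proof -
    have "u v \<le> sum u S" by (rule member_le_sum[OF that]) (use u(1) fin in auto)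
    thus ?thesis using u(2) by simp
  qed
  define \<beta> where "\<beta> v = (1 - u v) / k" for v
  have beta0: "0 \<le> \<beta> v" if "v \<in> S" for v unfolding \<beta>_def using u1[OF that] k by simp
  have sumbeta: "sum \<beta> S = (k - 1) / k"
  proof -
    have "sum \<beta> S = (\<Sum>v\<in>S. 1 - u v) / k" unfolding \<beta>_def by (simp add: sum_divide_distrib)
    also have "(\<Sum>v\<in>S. 1 - u v) = k - 1" using u(2) unfolding k_def by (simp add: sum_subtractf)
    finally show ?thesis .
  qed
  have decomp: "s - avg S = (1 / k) *\<^sub>R (s - y) + (\<Sum>v\<in>S. \<beta> v *\<^sub>R (s - v))"
  proof -
    have "(\<Sum>v\<in>S. \<beta> v *\<^sub>R (s - v)) = (\<Sum>v\<in>S. \<beta> v *\<^sub>R s) - (\<Sum>v\<in>S. \<beta> v *\<^sub>R v)"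
      by (simp add: scaleR_diff_right sum_subtractf)
    also have "(\<Sum>v\<in>S. \<beta> v *\<^sub>R s) = ((k - 1) / k) *\<^sub>R s"
      using sumbeta by (simp add: scaleR_sum_left[symmetric])
    also have "(\<Sum>v\<in>S. \<beta> v *\<^sub>R v) = (1 / k) *\<^sub>R (\<Sum>v\<in>S. v) - (1 / k) *\<^sub>R y"
    proof -
      have "(\<Sum>v\<in>S. \<beta> v *\<^sub>R v) = (\<Sum>v\<in>S. (1 / k) *\<^sub>R v - (1 / k) *\<^sub>R (u v *\<^sub>R v))"
        unfolding \<beta>_def by (intro sum.cong refl) (simp add: diff_divide_distrib scaleR_diff_left)
      also have "\<dots> = (1 / k) *\<^sub>R (\<Sum>v\<in>S. v) - (1 / k) *\<^sub>R (\<Sum>v\<in>S. u v *\<^sub>R v)"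
        by (simp add: sum_subtractf scaleR_sum_right)
      finally show ?thesis using u(3) by simp
    qed
    finally have sb: "(\<Sum>v\<in>S. \<beta> v *\<^sub>R (s - v)) = ((k - 1) / k) *\<^sub>R s - ((1 / k) *\<^sub>R (\<Sum>v\<in>S. v) - (1 / k) *\<^sub>R y)" .
    have ss: "(1 / k) *\<^sub>R s + ((k - 1) / k) *\<^sub>R s = s"
    proof -
      have e: "(1 / k) + (k - 1) / k = 1" using k by (simp add: field_simps)
      have "(1 / k) *\<^sub>R s + ((k - 1) / k) *\<^sub>R s = ((1 / k) + (k - 1) / k) *\<^sub>R s" by (rule scaleR_add_left[symmetric])
      also have "\<dots> = s" unfolding e by simp
      finally show ?thesis .
    qed
    have av: "avg S = (1 / k) *\<^sub>R (\<Sum>v\<in>S. v)" unfolding avg_def k_def by (simp add: divide_inverse)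
    have "(1 / k) *\<^sub>R (s - y) + (((k - 1) / k) *\<^sub>R s - ((1 / k) *\<^sub>R (\<Sum>v\<in>S. v) - (1 / k) *\<^sub>R y))
        = ((1 / k) *\<^sub>R s + ((k - 1) / k) *\<^sub>R s) - (1 / k) *\<^sub>R (\<Sum>v\<in>S. v)"
      by (simp add: algebra_simps)
    also have "\<dots> = s - avg S" unfolding ss av ..
    finally show ?thesis unfolding sb by simp
  qed
  have "norm (\<Sum>v\<in>S. \<beta> v *\<^sub>R (s - v)) \<le> (\<Sum>v\<in>S. \<beta> v * d)"
  proof -
    have "norm (\<Sum>v\<in>S. \<beta> v *\<^sub>R (s - v)) \<le> (\<Sum>v\<in>S. norm (\<beta> v *\<^sub>R (s - v)))" by (rule norm_sum)
    also have "\<dots> \<le> (\<Sum>v\<in>S. \<beta> v * d)"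
    proof (rule sum_mono)
      fix v assume v: "v \<in> S"
      have "norm (\<beta> v *\<^sub>R (s - v)) = \<beta> v * norm (s - v)" using beta0[OF v] by simp
      also have "\<dots> \<le> \<beta> v * d" by (rule mult_left_mono[OF bd[OF v] beta0[OF v]])
      finally show "norm (\<beta> v *\<^sub>R (s - v)) \<le> \<beta> v * d" .
    qed
    finally show ?thesis .
  qed
  also have "(\<Sum>v\<in>S. \<beta> v * d) = (k - 1) / k * d" using sumbeta by (simp add: sum_distrib_right[symmetric])
  finally have nb: "norm (\<Sum>v\<in>S. \<beta> v *\<^sub>R (s - v)) \<le> (k - 1) / k * d" .
  have "norm (s - avg S) \<le> norm ((1 / k) *\<^sub>R (s - y)) + norm (\<Sum>v\<in>S. \<beta> v *\<^sub>R (s - v))"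
    unfolding decomp by (rule norm_triangle_ineq)
  also have "norm ((1 / k) *\<^sub>R (s - y)) = norm (s - y) / k" using k by simp
  finally have "d - \<eta> \<le> norm (s - y) / k + (k - 1) / k * d" using far nb by linarith
  hence "k * (d - \<eta>) \<le> k * (norm (s - y) / k + (k - 1) / k * d)" using k by (simp add: mult_left_mono)
  also have "k * (norm (s - y) / k + (k - 1) / k * d) = norm (s - y) + (k - 1) * d"
    using k by (simp add: field_simps)
  finally have "k * (d - \<eta>) \<le> norm (s - y) + (k - 1) * d" .
  thus ?thesis unfolding k_def[symmetric] by (simp add: algebra_simps)
qed

definition eta :: "real \<Rightarrow> nat \<Rightarrow> real" where
  "eta d m = d / (2 * (real m + 1)^2)"

definition nxt :: "'a::real_normed_vector set \<Rightarrow> real \<Rightarrow> 'a set \<Rightarrow> nat \<Rightarrow> 'a" where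
  "nxt B d S m = (SOME w. w \<in> B \<and> d - eta d m \<le> norm (w - avg S))"

primrec seqS :: "'a::real_normed_vector set \<Rightarrow> real \<Rightarrow> 'a \<Rightarrow> nat \<Rightarrow> 'a set" where
  "seqS B d a 0 = {a}"
| "seqS B d a (Suc n) = insert (nxt B d (seqS B d a n) (Suc n)) (seqS B d a n)"

definition sq :: "'a::real_normed_vector set \<Rightarrow> real \<Rightarrow> 'a \<Rightarrow> nat \<Rightarrow> 'a" where
  "sq B d a m = (case m of 0 \<Rightarrow> a | Suc n \<Rightarrow> nxt B d (seqS B d a n) (Suc n))"

lemma seqS_eq: "seqS B d a n = sq B d a ` {..n}"
proof (induction n)
  case 0 show ?case by (simp add: sq_def)
next
  case (Suc n)
  have "seqS B d a (Suc n) = insert (sq B d a (Suc n)) (sq B d a ` {..n})"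
    using Suc by (simp add: sq_def)
  also have "\<dots> = sq B d a ` {..Suc n}" by (simp add: atMost_Suc)
  finally show ?case .
qed

lemma nxt_prop:
  fixes B :: "'a::real_normed_vector set"
  assumes cvx: "convex B" and d: "d > 0" and dia: "\<And>x. x \<in> B \<Longrightarrow> d \<le> rad x B"
    and S: "S \<subseteq> B" "finite S" "S \<noteq> {}"
  shows "nxt B d S m \<in> B \<and> d - eta d m \<le> norm (nxt B d S m - avg S)"
proof -
  have avgB: "avg S \<in> B"
  proof -
    have "convex hull S \<subseteq> B" by (rule hull_minimal[where S=convex, OF S(1) cvx])
    thus ?thesis using avg_in_hull[OF S(2,3)] by blast
  qed
  have etap: "eta d m > 0" unfolding eta_def using d by simp
  have "\<exists>w. w \<in> B \<and> d - eta d m \<le> norm (w - avg S)"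
  proof (rule ccontr)
    assume "\<not> ?thesis"
    hence "norm (avg S - w) \<le> d - eta d m" if "w \<in> B" for w
      using that by (auto simp: norm_minus_commute not_le)
    hence "rad (avg S) B \<le> d - eta d m" using avgB by (intro rad_least) auto
    thus False using dia[OF avgB] etap by simp
  qed
  thus ?thesis unfolding nxt_def by (rule someI_ex)
qed

lemma seq_props:
  fixes B :: "'a::real_normed_vector set"
  assumes cvx: "convex B" and d: "d > 0" and dia: "\<And>x. x \<in> B \<Longrightarrow> d \<le> rad x B"
    and bd: "\<And>x y. x \<in> B \<Longrightarrow> y \<in> B \<Longrightarrow> norm (x - y) \<le> d" and a: "a \<in> B"
  shows "sq B d a m \<in> B"
    and "0 < m \<Longrightarrow> y \<in> convex hull (sq B d a ` {..<m}) \<Longrightarrow> d - d / (2 * (real m + 1)) \<le> norm (sq B d a m - y)"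
proof -
  have SB: "seqS B d a n \<subseteq> B" for n
  proof (induction n)
    case 0 thus ?case using a by simp
  next
    case (Suc n)
    have "finite (seqS B d a n)" "seqS B d a n \<noteq> {}" unfolding seqS_eq by auto
    thus ?case using nxt_prop[OF cvx d dia Suc] Suc by simp
  qed
  show "sq B d a m \<in> B" using SB[of m] unfolding seqS_eq by auto
  assume m: "0 < m" and y: "y \<in> convex hull (sq B d a ` {..<m})"
  then obtain n where n: "m = Suc n" using gr0_implies_Suc by blast
  have lt: "{..<m} = {..n}" using n by auto
  let ?S = "seqS B d a n"
  have fin: "finite ?S" "?S \<noteq> {}" unfolding seqS_eq by auto
  have nx: "sq B d a m = nxt B d ?S m" unfolding sq_def n by simp
  have P: "nxt B d ?S m \<in> B \<and> d - eta d m \<le> norm (nxt B d ?S m - avg ?S)"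
    by (rule nxt_prop[OF cvx d dia SB fin])
  have yS: "y \<in> convex hull ?S" using y unfolding seqS_eq lt .
  have "d - real (card ?S) * eta d m \<le> norm (nxt B d ?S m - y)"
  proof (rule avg_far[OF fin _ _ yS])
    show "norm (nxt B d ?S m - v) \<le> d" if "v \<in> ?S" for v using bd P SB that by blast
    show "d - eta d m \<le> norm (nxt B d ?S m - avg ?S)" using P by simp
  qed
  moreover have "real (card ?S) * eta d m \<le> d / (2 * (real m + 1))"
  proof -
    have "card ?S \<le> m" unfolding seqS_eq n using card_image_le[of "{..n}" "sq B d a"] by simp
    hence "real (card ?S) * eta d m \<le> real m * eta d m"
      using d unfolding eta_def by (intro mult_right_mono) auto
    also have "real m * eta d m \<le> d / (2 * (real m + 1))"
    proof -
      have "real m * eta d m = d * real m / (2 * (real m + 1)^2)" unfolding eta_def by simp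
      also have "\<dots> \<le> d * (real m + 1) / (2 * (real m + 1)^2)"
        using d by (intro divide_right_mono mult_left_mono) auto
      also have "\<dots> = d / (2 * (real m + 1))" by (simp add: power2_eq_square)
      finally show ?thesis .
    qed
    finally show ?thesis .
  qed
  ultimately show "d - d / (2 * (real m + 1)) \<le> norm (sq B d a m - y)" unfolding nx by linarith
qed

lemma counterexample:
  fixes K B :: "'a::banach set"
  assumes wcK: "weakly_compact K" and BK: "B \<subseteq> K" and cB: "closed B" and cvx: "convex B"
    and dpos: "diameter B > 0" and dia0: "\<And>x. x \<in> B \<Longrightarrow> \<not> rad x B < diameter B"
  shows "\<exists>(C::'a set) T. weakly_compact C \<and> convex C \<and> C \<noteq> {} \<and> T ` C \<subseteq> C \<and>
        orbitally_kannan C T \<and> diminishes_radius_of_orbits C T \<and> (\<forall>x\<in>C. T x \<noteq> x)"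
proof -
  define d where "d = diameter B"
  have d: "d > 0" using dpos unfolding d_def .
  have bB: "bounded B" using bounded_subset[OF weakly_compact_bounded[OF wcK] BK] .
  have Bne: "B \<noteq> {}" using dpos unfolding diameter_def by auto
  then obtain a where a: "a \<in> B" by blast
  have dia: "d \<le> rad x B" if "x \<in> B" for x using dia0[OF that] unfolding d_def by simp
  have bd: "norm (x - y) \<le> d" if "x \<in> B" "y \<in> B" for x y
    using diameter_bounded_bound[OF bB that] unfolding d_def by (simp add: dist_norm)
  define s where "s = sq B d a"
  have sB: "s m \<in> B" for m unfolding s_def by (rule seq_props(1)[OF cvx d dia bd a])
  have far: "d - d / (2 * (real m + 1)) \<le> norm (s m - y)" if "0 < m" "y \<in> convex hull (s ` {..<m})" for m y
    unfolding s_def by (rule seq_props(2)[OF cvx d dia bd a that[unfolded s_def]])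
  have sfar: "d / 2 \<le> norm (s m - s n)" if "n < m" for m n
  proof -
    have "s n \<in> s ` {..<m}" using that by simp
    hence "s n \<in> convex hull (s ` {..<m})" using hull_subset[of "s ` {..<m}" convex] by blast
    hence "d - d / (2 * (real m + 1)) \<le> norm (s m - s n)" using that by (intro far) auto
    moreover have "d / (2 * (real m + 1)) \<le> d / 2" by (rule divide_left_mono) (use d in auto)
    ultimately show ?thesis by linarith
  qed
  have inj: "inj s"
  proof (rule injI)
    fix m n assume eq: "s m = s n"
    show "m = n"
    proof (rule ccontr)
      assume "m \<noteq> n"
      hence "n < m \<or> m < n" by auto
      hence "d / 2 \<le> norm (s m - s n)" using sfar[of n m] sfar[of m n] by (auto simp: norm_minus_commute)
      thus False using eq d by simp
    qed
  qed
  define C where "C = closure (convex hull (range s))"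
  have rsC: "range s \<subseteq> C" unfolding C_def by (rule order_trans[OF hull_subset closure_subset])
  have CB: "C \<subseteq> B"
  proof -
    have "range s \<subseteq> B" using sB by blast
    hence "convex hull (range s) \<subseteq> B" by (rule hull_minimal[where S=convex, OF _ cvx])
    thus ?thesis unfolding C_def by (rule closure_minimal[OF _ cB])
  qed
  have bC: "bounded C" using bounded_subset[OF bB CB] .
  have approx: "\<exists>m\<ge>N. d - \<epsilon> \<le> norm (x - s m)" if x: "x \<in> C" and e: "\<epsilon> > 0" for x N \<epsilon>
  proof -
    have "\<forall>e>0. \<exists>y\<in>convex hull (range s). dist y x < e" using x unfolding C_def closure_approachable .
    moreover have "\<epsilon> / 2 > 0" using e by simp
    ultimately obtain y where y: "y \<in> convex hull (range s)" "dist y x < \<epsilon> / 2" by blast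
    have "\<exists>F u. finite F \<and> F \<subseteq> range s \<and> (\<forall>x\<in>F. 0 \<le> u x) \<and> sum u F = 1 \<and> (\<Sum>v\<in>F. u v *\<^sub>R v) = y"
      using y(1) unfolding convex_hull_explicit by (rule CollectD)
    then obtain F u where F: "finite F" "F \<subseteq> range s" "\<forall>x\<in>F. 0 \<le> u x" "sum u F = 1" "(\<Sum>v\<in>F. u v *\<^sub>R v) = y"
      by (elim exE conjE) simp
    have yF: "y \<in> convex hull F"
    proof -
      have "\<exists>u. (\<forall>x\<in>F. 0 \<le> u x) \<and> sum u F = 1 \<and> (\<Sum>v\<in>F. u v *\<^sub>R v) = y" using F(3-5) by blast
      thus ?thesis unfolding convex_hull_finite[OF F(1)] by (rule CollectI)
    qed
    obtain I where I: "I \<subseteq> UNIV" "finite I" "F = s ` I" using finite_subset_image[OF F(1) F(2)] by blast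
    define M where "M = Suc (Max (insert 0 I))"
    have IM: "I \<subseteq> {..<M}" unfolding M_def using I(2) by (auto simp: less_Suc_eq_le)
    obtain n0 :: nat where n0: "d / \<epsilon> < real n0" using reals_Archimedean2 by blast
    define m where "m = Suc (max (max N M) n0)"
    have mN: "m \<ge> N" "0 < m" "M \<le> m" "real n0 < real m + 1" unfolding m_def by auto
    have "F \<subseteq> s ` {..<m}" using IM mN(3) I(3) by auto
    hence "convex hull F \<subseteq> convex hull (s ` {..<m})" by (rule hull_mono)
    hence ym: "y \<in> convex hull (s ` {..<m})" using yF by blast
    have "d - d / (2 * (real m + 1)) \<le> norm (s m - y)" by (rule far[OF mN(2) ym])
    moreover have "d / (2 * (real m + 1)) < \<epsilon> / 2"
    proof -
      have "d < \<epsilon> * real n0" using n0 e by (simp add: divide_less_eq mult.commute)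
      also have "\<dots> \<le> \<epsilon> * (real m + 1)" using mN(4) e by simp
      finally have "d < \<epsilon> * (real m + 1)" .
      thus ?thesis by (simp add: divide_less_eq field_simps)
    qed
    moreover have "norm (s m - y) \<le> norm (x - s m) + norm (x - y)"
      using norm_triangle_ineq4[of "s m - y" "x - y"] norm_triangle_ineq[of "s m - x" "x - y"]
      by (simp add: norm_minus_commute)
    moreover have "norm (x - y) < \<epsilon> / 2" using y(2) by (simp add: dist_norm norm_minus_commute)
    ultimately have "d - \<epsilon> \<le> norm (x - s m)" by linarith
    thus ?thesis using mN(1) by blast
  qed
  define T where "T x = (if x \<in> range s then s (Suc (inv s x)) else s 0)" for x
  have Ts: "T (s n) = s (Suc n)" for n unfolding T_def using inj by simp
  have Tr: "T x \<in> range s" for x unfolding T_def by auto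
  have TC: "T ` C \<subseteq> C" using Tr rsC by blast
  have orbN: "\<exists>N. \<forall>m\<ge>N. s m \<in> orbit T x" for x
  proof (cases "x \<in> range s")
    case True
    then obtain n where n: "x = s n" by blast
    have it: "(T ^^ k) (s n) = s (n + k)" for k by (induction k) (simp_all add: Ts)
    have "s m \<in> orbit T x" if "m \<ge> n" for m
    proof -
      have "(T ^^ (m - n)) x = s m" using it[of "m - n"] that n by simp
      thus ?thesis using orbit_iter[of "m - n" T x] by simp
    qed
    thus ?thesis by blast
  next
    case False
    have it: "(T ^^ Suc k) x = s k" for k
    proof (induction k)
      case 0 show ?case using False unfolding T_def by simp
    next
      case (Suc k) thus ?case using Ts by simp
    qed
    have "s m \<in> orbit T x" for m using orbit_iter[of "Suc m" T x] it[of m] by simp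
    thus ?thesis by blast
  qed
  have borb: "bounded (orbit T x)" if "x \<in> C" for x using bounded_subset[OF bC orbit_sub[OF TC that]] .
  have radbig: "d \<le> rad x (orbit T x)" if x: "x \<in> C" for x
  proof (rule field_le_epsilon)
    fix \<epsilon> :: real assume e: "0 < \<epsilon>"
    obtain N where N: "\<forall>m\<ge>N. s m \<in> orbit T x" using orbN by blast
    obtain m where m: "m \<ge> N" "d - \<epsilon> \<le> norm (x - s m)" using approx[OF x e] by blast
    have "norm (x - s m) \<le> rad x (orbit T x)" by (rule rad_upper[OF borb[OF x]]) (use N m in blast)
    thus "d \<le> rad x (orbit T x) + \<epsilon>" using m by linarith
  qed
  have kan: "orbitally_kannan C T" unfolding orbitally_kannan_def
  proof (intro ballI)
    fix x y assume xy: "x \<in> C" "y \<in> C"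
    have "norm (T x - T y) \<le> d" using bd TC xy CB by blast
    moreover have "d \<le> (rad x (orbit T x) + rad y (orbit T y)) / 2"
      using radbig[OF xy(1)] radbig[OF xy(2)] by (simp add: field_simps)
    ultimately show "norm (T x - T y) \<le> (rad x (orbit T x) + rad y (orbit T y)) / 2"
      by (rule order_trans)
  qed
  have dim: "diminishes_radius_of_orbits C T" unfolding diminishes_radius_of_orbits_def
  proof (intro ballI)
    fix x assume x: "x \<in> C"
    have TxC: "T x \<in> C" using TC x by blast
    have "rad (T x) (orbit T (T x)) \<le> d"
    proof (rule rad_least)
      show "orbit T (T x) \<noteq> {}" using orbit_self[of "T x" T] by blast
      fix y assume "y \<in> orbit T (T x)"
      hence "y \<in> C" using orbit_sub[OF TC TxC] by blast
      thus "norm (T x - y) \<le> d" using bd TxC CB by blast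
    qed
    thus "rad (T x) (orbit T (T x)) \<le> rad x (orbit T x)" using radbig[OF x] by linarith
  qed
  have nofix: "\<forall>x\<in>C. T x \<noteq> x"
  proof (intro ballI notI)
    fix x assume x: "x \<in> C" and fx: "T x = x"
    show False
    proof (cases "x \<in> range s")
      case True
      then obtain n where n: "x = s n" by blast
      hence "s (Suc n) = s n" using fx Ts by simp
      thus False using inj by (simp add: inj_eq)
    next
      case False
      thus False using fx Tr[of x] by simp
    qed
  qed
  have wcC: "weakly_compact C"
  proof -
    have "weakly_compact (C \<inter> K)" unfolding C_def
      by (rule weakly_compact_Int[OF wcK closed_closure convex_closure[OF convex_convex_hull]])
    moreover have "C \<inter> K = C" using CB BK by blast
    ultimately show ?thesis by simp
  qed
  have cvC: "convex C" unfolding C_def by (rule convex_closure[OF convex_convex_hull])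
  have neC: "C \<noteq> {}" using rsC by blast
  have H: "weakly_compact C \<and> convex C \<and> C \<noteq> {} \<and> T ` C \<subseteq> C \<and>
        orbitally_kannan C T \<and> diminishes_radius_of_orbits C T \<and> (\<forall>x\<in>C. T x \<noteq> x)"
    using wcC cvC neC TC kan dim nofix by (intro conjI)
  show ?thesis by (rule exI[where x=C], rule exI[where x=T], rule H)
qed

theorem theorem4p6:
  shows "weak_normal_structure TYPE('a::banach) \<longleftrightarrow>
    (\<forall>(C :: 'a set) T. weakly_compact C \<and> convex C \<and> C \<noteq> {} \<and> T ` C \<subseteq> C \<and>
        orbitally_kannan C T \<and> diminishes_radius_of_orbits C T \<longrightarrow>
        (\<exists>!x. x \<in> C \<and> T x = x))"
proof
  assume wns: "weak_normal_structure TYPE('a)"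
  show "\<forall>(C :: 'a set) T. weakly_compact C \<and> convex C \<and> C \<noteq> {} \<and> T ` C \<subseteq> C \<and>
        orbitally_kannan C T \<and> diminishes_radius_of_orbits C T \<longrightarrow>
        (\<exists>!x. x \<in> C \<and> T x = x)"
  proof (intro allI impI)
    fix C :: "'a set" and T :: "'a \<Rightarrow> 'a"
    assume h: "weakly_compact C \<and> convex C \<and> C \<noteq> {} \<and> T ` C \<subseteq> C \<and>
        orbitally_kannan C T \<and> diminishes_radius_of_orbits C T"
    have "\<exists>x\<in>C. T x = x"
      by (rule fixed_point_exists[OF wns]) (use h in simp_all)
    then obtain x where x: "x \<in> C" "T x = x" by (elim bexE)
    have kan: "orbitally_kannan C T" using h by simp
    show "\<exists>!x. x \<in> C \<and> T x = x"
    proof (rule ex1I[of _ x])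
      show "x \<in> C \<and> T x = x" using x by simp
      fix y assume "y \<in> C \<and> T y = y"
      thus "y = x" using fixed_point_unique[OF kan, of y x] x by simp
    qed
  qed
next
  assume H: "\<forall>(C :: 'a set) T. weakly_compact C \<and> convex C \<and> C \<noteq> {} \<and> T ` C \<subseteq> C \<and>
        orbitally_kannan C T \<and> diminishes_radius_of_orbits C T \<longrightarrow>
        (\<exists>!x. x \<in> C \<and> T x = x)"
  show "weak_normal_structure TYPE('a)"
    unfolding weak_normal_structure_def normal_structure_def
  proof (intro allI impI)
    fix K K0 :: "'a set"
    assume K: "weakly_compact K \<and> convex K \<and> (\<exists>x\<in>K. \<exists>y\<in>K. x \<noteq> y)"
    assume K0: "K0 \<subseteq> K \<and> closed K0 \<and> convex K0 \<and> 0 < diameter K0"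
    show "\<exists>x0\<in>K0. rad x0 K0 < diameter K0"
    proof (rule ccontr)
      assume "\<not> (\<exists>x0\<in>K0. rad x0 K0 < diameter K0)"
      hence dia0: "\<And>x. x \<in> K0 \<Longrightarrow> \<not> rad x K0 < diameter K0" by blast
      have ex: "\<exists>(C::'a set) T. weakly_compact C \<and> convex C \<and> C \<noteq> {} \<and> T ` C \<subseteq> C \<and>
        orbitally_kannan C T \<and> diminishes_radius_of_orbits C T \<and> (\<forall>x\<in>C. T x \<noteq> x)"
        by (rule counterexample[of K K0]) (use K K0 dia0 in simp_all)
      obtain C :: "'a set" and T where CT: "weakly_compact C \<and> convex C \<and> C \<noteq> {} \<and> T ` C \<subseteq> C \<and>
        orbitally_kannan C T \<and> diminishes_radius_of_orbits C T \<and> (\<forall>x\<in>C. T x \<noteq> x)"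
        using ex by (elim exE)
      have CT1: "weakly_compact C \<and> convex C \<and> C \<noteq> {} \<and> T ` C \<subseteq> C \<and>
        orbitally_kannan C T \<and> diminishes_radius_of_orbits C T" using CT by simp
      have nf: "\<forall>x\<in>C. T x \<noteq> x" using CT by simp
      have "\<exists>!x. x \<in> C \<and> T x = x" by (rule H[rule_format, OF CT1])
      then obtain x where "x \<in> C \<and> T x = x" by (elim ex1E)
      thus False using nf by blast
    qed
  qed
qed


end
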